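(* Let $T$ be a finite rooted tree in which every inner node has at least two children, with node set $V$ and leaf set $L$. If $X\subseteq V\setminus L$ is thin, then there exists a pair $(\pi,\sigma)$ of injective maps from $X$ to $L$ that has unique request and identifies $X$.
   Context: A set $X\subseteq V\setminus L$ of inner nodes is thin if for every $x\in X$ other than the root, the parent of $x$ does not belong to $X$, and $x$ has at least one sibling (possibly a leaf) that does not belong to $X$. A pair $(\pi,\sigma)$ of injective maps from $X$ to $L$ identifies $X$ if for each $s\in X$, $s$ is the least common ancestor of $\pi(s)$ and $\sigma(s)$ (every node is its own ancestor). For $s\in X$, a node $y$ is $s$-requested in $(\pi,\sigma)$ if $y$ lies on the path of $T$ from $\pi(s)$ to $\sigma(s)$; the pair has unique request if every node is $s$-requested for at most one $s\in X$. *)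

theory Defs
  imports Main
begin

text \<open>Every node reaches the root by
iterating par, which (together with par r = r) rules out cycles.\<close>

definition anc :: "('a \<Rightarrow> 'a) \<Rightarrow> 'a \<Rightarrow> 'a \<Rightarrow> bool" where
  "anc par u v \<longleftrightarrow> (\<exists>n. (par ^^ n) v = u)"

definition children :: "'a set \<Rightarrow> 'a \<Rightarrow> ('a \<Rightarrow> 'a) \<Rightarrow> 'a \<Rightarrow> 'a set" where
  "children V r par v = {u \<in> V. u \<noteq> r \<and> par u = v}"

definition leaves :: "'a set \<Rightarrow> 'a \<Rightarrow> ('a \<Rightarrow> 'a) \<Rightarrow> 'a set" where
  "leaves V r par = {v \<in> V. children V r par v = {}}"

definition rooted_tree :: "'a set \<Rightarrow> 'a \<Rightarrow> ('a \<Rightarrow> 'a) \<Rightarrow> bool" where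
  "rooted_tree V r par \<longleftrightarrow> finite V \<and> r \<in> V \<and> par r = r \<and>
     (\<forall>v\<in>V. par v \<in> V) \<and> (\<forall>v\<in>V. anc par r v)"

definition full_tree :: "'a set \<Rightarrow> 'a \<Rightarrow> ('a \<Rightarrow> 'a) \<Rightarrow> bool" where
  "full_tree V r par \<longleftrightarrow> rooted_tree V r par \<and>
     (\<forall>v \<in> V - leaves V r par. card (children V r par v) \<ge> 2)"

definition thin :: "'a set \<Rightarrow> 'a \<Rightarrow> ('a \<Rightarrow> 'a) \<Rightarrow> 'a set \<Rightarrow> bool" where
  "thin V r par X \<longleftrightarrow> X \<subseteq> V - leaves V r par \<and>
     (\<forall>x\<in>X. x \<noteq> r \<longrightarrow> par x \<notin> X \<and>
        (\<exists>y \<in> children V r par (par x). y \<noteq> x \<and> y \<notin> X))"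

definition is_lca :: "('a \<Rightarrow> 'a) \<Rightarrow> 'a \<Rightarrow> 'a \<Rightarrow> 'a \<Rightarrow> bool" where
  "is_lca par s a b \<longleftrightarrow> anc par s a \<and> anc par s b \<and>
     (\<forall>c. anc par c a \<and> anc par c b \<longrightarrow> anc par c s)"

text \<open>y lies on the tree path from a to b: y is an ancestor of a or of b and a
descendant of every common ancestor of a and b (i.e. of their lca).\<close>
definition on_path :: "('a \<Rightarrow> 'a) \<Rightarrow> 'a \<Rightarrow> 'a \<Rightarrow> 'a \<Rightarrow> bool" where
  "on_path par a b y \<longleftrightarrow> (anc par y a \<or> anc par y b) \<and>
     (\<forall>c. anc par c a \<and> anc par c b \<longrightarrow> anc par c y)"

definition identifies :: "'a set \<Rightarrow> 'a \<Rightarrow> ('a \<Rightarrow> 'a) \<Rightarrow> 'a set \<Rightarrow> ('a \<Rightarrow> 'a) \<Rightarrow> ('a \<Rightarrow> 'a) \<Rightarrow> bool" where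
  "identifies V r par X \<pi> \<sigma> \<longleftrightarrow>
     inj_on \<pi> X \<and> \<pi> ` X \<subseteq> leaves V r par \<and> inj_on \<sigma> X \<and> \<sigma> ` X \<subseteq> leaves V r par \<and>
     (\<forall>s\<in>X. is_lca par s (\<pi> s) (\<sigma> s))"

definition unique_request :: "('a \<Rightarrow> 'a) \<Rightarrow> 'a set \<Rightarrow> ('a \<Rightarrow> 'a) \<Rightarrow> ('a \<Rightarrow> 'a) \<Rightarrow> bool" where
  "unique_request par X \<pi> \<sigma> \<longleftrightarrow>
     (\<forall>y s t. s \<in> X \<and> t \<in> X \<and> on_path par (\<pi> s) (\<sigma> s) y \<and> on_path par (\<pi> t) (\<sigma> t) y
        \<longrightarrow> s = t)"

end

theory Submission
  imports Defs
begin

lemma anc_refl: "anc par v v"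
  unfolding anc_def by (rule exI[of _ 0]) simp

lemma anc_par: "anc par (par v) v"
  unfolding anc_def by (rule exI[of _ 1]) simp

lemma anc_trans: "anc par a b \<Longrightarrow> anc par b c \<Longrightarrow> anc par a c"
  unfolding anc_def by (metis funpow_add comp_apply)

lemma anc_lin: "anc par a v \<Longrightarrow> anc par b v \<Longrightarrow> anc par a b \<or> anc par b a"
proof -
  assume "anc par a v" "anc par b v"
  then obtain n m where n: "(par ^^ n) v = a" and m: "(par ^^ m) v = b" unfolding anc_def by blast
  show ?thesis
  proof (cases "n \<le> m")
    case True
    then have "(par ^^ m) v = (par ^^ (m - n)) ((par ^^ n) v)"
      by (metis funpow_add comp_apply le_add_diff_inverse2)
    then show ?thesis using n m unfolding anc_def by metis
  next
    case False
    then have "(par ^^ n) v = (par ^^ (n - m)) ((par ^^ m) v)"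
      by (metis funpow_add comp_apply le_add_diff_inverse2 nat_le_linear)
    then show ?thesis using n m unfolding anc_def by metis
  qed
qed

lemma anc_step: "anc par z c \<Longrightarrow> z = c \<or> anc par z (par c)"
proof -
  assume "anc par z c"
  then obtain n where n: "(par ^^ n) c = z" unfolding anc_def by blast
  show ?thesis
  proof (cases n)
    case 0 then show ?thesis using n by simp
  next
    case (Suc k)
    then have "(par ^^ k) (par c) = z" using n by (simp add: funpow_Suc_right del: funpow.simps)
    then show ?thesis unfolding anc_def by blast
  qed
qed

lemma funpow_fix: "f x = x \<Longrightarrow> (f ^^ n) x = x"
  by (induction n) auto

lemma tree_root:
  assumes "rooted_tree V r par" "v \<in> V" "(par ^^ n) v = v" "n > 0"
  shows "v = r"
proof -
  from assms(1,2) obtain k where k: "(par ^^ k) v = r" unfolding rooted_tree_def anc_def by blast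
  have pr: "par r = r" using assms(1) unfolding rooted_tree_def by blast
  have per: "(par ^^ (n * j)) v = v" for j
  proof (induction j)
    case 0 then show ?case by simp
  next
    case (Suc j)
    have "(par ^^ (n * Suc j)) v = (par ^^ (n * j)) ((par ^^ n) v)"
      by (metis funpow_add comp_apply mult_Suc_right add.commute)
    then show ?case using Suc assms(3) by simp
  qed
  have "k \<le> n * k" using assms(4) by simp
  then have "(par ^^ (n * k)) v = (par ^^ (n * k - k)) ((par ^^ k) v)"
    by (metis funpow_add comp_apply le_add_diff_inverse2)
  also have "\<dots> = r" using k pr funpow_fix[of par r] by simp
  finally show ?thesis using per[of k] by simp
qed

lemma anc_antisym:
  assumes "rooted_tree V r par" "b \<in> V" "anc par a b" "anc par b a"
  shows "a = b"
proof -
  obtain n m where n: "(par ^^ n) b = a" and m: "(par ^^ m) a = b"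
    using assms(3,4) unfolding anc_def by blast
  have "(par ^^ (m + n)) b = b" using n m by (simp add: funpow_add)
  show ?thesis
  proof (cases "m + n = 0")
    case True then show ?thesis using n by simp
  next
    case False
    then have "b = r" using tree_root[OF assms(1,2) \<open>(par ^^ (m + n)) b = b\<close>] by simp
    moreover have "par r = r" using assms(1) unfolding rooted_tree_def by blast
    ultimately show ?thesis using n funpow_fix[of par r] by simp
  qed
qed

lemma par_ne:
  assumes "rooted_tree V r par" "c \<in> V" "c \<noteq> r"
  shows "par c \<noteq> c"
  using tree_root[OF assms(1,2), of 1] assms(3) by auto

lemma leaf_exists:
  assumes tr: "rooted_tree V r par" and th: "thin V r par X" and vV: "v \<in> V"
  shows "\<exists>l \<in> leaves V r par. anc par v l \<and> (\<forall>z. anc par z l \<and> anc par v z \<and> z \<noteq> v \<longrightarrow> z \<notin> X)"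
proof -
  define D where "D = {w \<in> V. anc par v w \<and> (\<forall>z. anc par z w \<and> anc par v z \<and> z \<noteq> v \<longrightarrow> z \<notin> X)}"
  define f where "f w = card {u \<in> V. anc par u w}" for w
  have finV: "finite V" using tr unfolding rooted_tree_def by blast
  have finD: "finite D" using finV unfolding D_def by simp
  have "v \<in> D" unfolding D_def using vV anc_refl[of par v] anc_antisym[OF tr vV] by blast
  then have "f ` D \<noteq> {}" by blast
  moreover have "finite (f ` D)" using finD by simp
  ultimately have "Max (f ` D) \<in> f ` D" by (meson Max_in)
  then obtain w where wD: "w \<in> D" and wmax: "f w = Max (f ` D)" by (metis imageE)
  have wmax': "f w' \<le> f w" if "w' \<in> D" for w'
    using wmax that finD by simp
  have "w \<in> leaves V r par"
  proof (rule ccontr)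
    assume nl: "w \<notin> leaves V r par"
    have wV: "w \<in> V" using wD unfolding D_def by blast
    then have "children V r par w \<noteq> {}" using nl unfolding leaves_def by blast
    then obtain x where x: "x \<in> children V r par w" by blast
    have "\<exists>c \<in> children V r par w. c \<notin> X"
    proof (cases "x \<in> X")
      case True
      then have "x \<noteq> r" using x unfolding children_def by blast
      then obtain y where "y \<in> children V r par (par x)" "y \<notin> X"
        using th True unfolding thin_def by blast
      moreover have "par x = w" using x unfolding children_def by blast
      ultimately show ?thesis by blast
    next
      case False then show ?thesis using x by blast
    qed
    then obtain c where c: "c \<in> children V r par w" "c \<notin> X" by blast
    have cV: "c \<in> V" and pc: "par c = w" and cr: "c \<noteq> r" using c unfolding children_def by auto
    have awc: "anc par w c" using anc_par[of par c] pc by simp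
    have "c \<in> D"
    proof -
      have "anc par v w" using wD unfolding D_def by blast
      then have "anc par v c" using anc_trans[OF _ awc] by blast
      moreover have "z \<notin> X" if "anc par z c" "anc par v z" "z \<noteq> v" for z
      proof -
        from anc_step[OF that(1)] have "z = c \<or> anc par z w" using pc by simp
        then show ?thesis using c(2) wD that unfolding D_def by blast
      qed
      ultimately show ?thesis using cV unfolding D_def by blast
    qed
    have "insert c {u \<in> V. anc par u w} \<subseteq> {u \<in> V. anc par u c}"
      using cV awc anc_trans[of par _ w c] anc_refl[of par c] by blast
    moreover have "c \<notin> {u \<in> V. anc par u w}"
    proof
      assume "c \<in> {u \<in> V. anc par u w}"
      then have "c = w" using anc_antisym[OF tr wV _ awc] by blast
      then show False using par_ne[OF tr cV cr] pc by simp
    qed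
    ultimately have "card {u \<in> V. anc par u w} + 1 \<le> card {u \<in> V. anc par u c}"
    proof -
      have f1: "finite {u \<in> V. anc par u c}" "finite {u \<in> V. anc par u w}" using finV by auto
      have "card (insert c {u \<in> V. anc par u w}) \<le> card {u \<in> V. anc par u c}"
        by (rule card_mono[OF f1(1)]) fact
      moreover have "card (insert c {u \<in> V. anc par u w}) = card {u \<in> V. anc par u w} + 1"
        using card_insert_disjoint[OF f1(2)] \<open>c \<notin> {u \<in> V. anc par u w}\<close> by simp
      ultimately show ?thesis by simp
    qed
    then have "f w < f c" unfolding f_def by simp
    with wmax'[OF \<open>c \<in> D\<close>] show False by simp
  qed
  then show ?thesis using wD unfolding D_def by blast
qed

lemma good_child:
  assumes tr: "rooted_tree V r par" and th: "thin V r par X" and sV: "s \<in> V" and sX: "s \<in> X"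
    and c: "c \<in> children V r par s"
  shows "\<exists>l \<in> leaves V r par. anc par c l \<and> (\<forall>z. anc par z l \<and> anc par s z \<and> z \<noteq> s \<longrightarrow> z \<notin> X)"
proof -
  have cV: "c \<in> V" and pc: "par c = s" and cr: "c \<noteq> r" using c unfolding children_def by auto
  have cX: "c \<notin> X" using th sX pc cr unfolding thin_def by blast
  obtain l where l: "l \<in> leaves V r par" "anc par c l"
    and g: "\<forall>z. anc par z l \<and> anc par c z \<and> z \<noteq> c \<longrightarrow> z \<notin> X"
    using leaf_exists[OF tr th cV] by blast
  have "z \<notin> X" if z: "anc par z l" "anc par s z" "z \<noteq> s" for z
  proof -
    from anc_lin[OF z(1) l(2)] show ?thesis
    proof
      assume "anc par z c"
      then have "z = c \<or> anc par z s" using anc_step[of par z c] pc by simp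
      then show ?thesis
      proof
        assume "anc par z s"
        then have "z = s" using anc_antisym[OF tr sV] z(2) by blast
        then show ?thesis using z(3) by simp
      qed (use cX in simp)
    next
      assume "anc par c z"
      then show ?thesis using g z cX by blast
    qed
  qed
  then show ?thesis using l by blast
qed

lemma two_elems: "card A \<ge> 2 \<Longrightarrow> \<exists>a b. a \<in> A \<and> b \<in> A \<and> a \<noteq> b"
  by (metis One_nat_def card.infinite card_le_Suc0_iff_eq not_less_eq_eq numeral_2_eq_2 zero_le)

lemma on_path_self: "on_path par a b a"
  unfolding on_path_def using anc_refl[of par a] by blast

lemma on_path_self2: "on_path par a b b"
  unfolding on_path_def using anc_refl[of par b] by blast

theorem lemma3p8:
  fixes V :: "'a set" and r :: 'a and par :: "'a \<Rightarrow> 'a" and X :: "'a set"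
  assumes "full_tree V r par"
    and "thin V r par X"
  shows "\<exists>\<pi> \<sigma>. identifies V r par X \<pi> \<sigma> \<and> unique_request par X \<pi> \<sigma>"
proof -
  have tr: "rooted_tree V r par" using assms(1) unfolding full_tree_def by blast
  have th: "thin V r par X" by fact
  define good where "good s l \<longleftrightarrow> l \<in> leaves V r par \<and> anc par s l \<and>
      (\<forall>z. anc par z l \<and> anc par s z \<and> z \<noteq> s \<longrightarrow> z \<notin> X)" for s l
  define P where "P s p \<longleftrightarrow> good s (fst p) \<and> good s (snd p) \<and>
      (\<exists>c1 c2. c1 \<in> children V r par s \<and> c2 \<in> children V r par s \<and> c1 \<noteq> c2 \<and>
         anc par c1 (fst p) \<and> anc par c2 (snd p))" for s p
  have "\<forall>s\<in>X. \<exists>p. P s p"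
  proof
    fix s assume sX: "s \<in> X"
    have sV: "s \<in> V" and snl: "s \<notin> leaves V r par" using th sX unfolding thin_def by auto
    have "card (children V r par s) \<ge> 2" using assms(1) sV snl unfolding full_tree_def by blast
    then obtain c1 c2 where c: "c1 \<in> children V r par s" "c2 \<in> children V r par s" "c1 \<noteq> c2"
      using two_elems by blast
    have as: "anc par s c" if "c \<in> children V r par s" for c
      using that anc_par[of par c] unfolding children_def by auto
    obtain l1 where l1: "l1 \<in> leaves V r par" "anc par c1 l1"
        "\<forall>z. anc par z l1 \<and> anc par s z \<and> z \<noteq> s \<longrightarrow> z \<notin> X"
      using good_child[OF tr th sV sX c(1)] by blast
    obtain l2 where l2: "l2 \<in> leaves V r par" "anc par c2 l2"
        "\<forall>z. anc par z l2 \<and> anc par s z \<and> z \<noteq> s \<longrightarrow> z \<notin> X"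
      using good_child[OF tr th sV sX c(2)] by blast
    have "good s l1" unfolding good_def using l1 anc_trans[OF as[OF c(1)] l1(2)] by blast
    moreover have "good s l2" unfolding good_def using l2 anc_trans[OF as[OF c(2)] l2(2)] by blast
    ultimately have "P s (l1, l2)" unfolding P_def fst_conv snd_conv using c(1,2,3) l1(2) l2(2) by blast
    then show "\<exists>p. P s p" by blast
  qed
  then obtain g where g: "\<forall>s\<in>X. P s (g s)" using bchoice by blast
  define \<pi> where "\<pi> s = fst (g s)" for s
  define \<sigma> where "\<sigma> s = snd (g s)" for s
  have gp: "good s (\<pi> s)" "good s (\<sigma> s)" if "s \<in> X" for s
    using g that unfolding P_def \<pi>_def \<sigma>_def by auto
  have UR: "s = t" if st: "s \<in> X" "t \<in> X" "on_path par (\<pi> s) (\<sigma> s) y" "on_path par (\<pi> t) (\<sigma> t) y" for s t y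
  proof (rule ccontr)
    assume ne: "s \<noteq> t"
    have sy: "anc par s y" using st(3) gp[OF st(1)] unfolding on_path_def good_def by blast
    have ty: "anc par t y" using st(4) gp[OF st(2)] unfolding on_path_def good_def by blast
    have key: False if ab: "a \<in> X" "b \<in> X" "a \<noteq> b" "anc par a y" "anc par b y" "anc par b a"
       "on_path par (\<pi> b) (\<sigma> b) y" for a b
    proof -
      have "anc par y (\<pi> b) \<or> anc par y (\<sigma> b)" using ab(7) unfolding on_path_def by blast
      then obtain l where "good b l" "anc par y l" using gp[OF ab(2)] by blast
      then have "anc par a l" using anc_trans[OF ab(4)] by blast
      then have "a \<notin> X" using \<open>good b l\<close> ab(3,6) unfolding good_def by auto
      then show False using ab(1) by blast
    qed
    from anc_lin[OF sy ty] show False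
    proof
      assume "anc par s t" then show False using key[of t s] st ne sy ty by blast
    next
      assume "anc par t s" then show False using key[of s t] st ne sy ty by blast
    qed
  qed
  have lca: "is_lca par s (\<pi> s) (\<sigma> s)" if sX: "s \<in> X" for s
  proof -
    have sV: "s \<in> V" using th sX unfolding thin_def by auto
    obtain c1 c2 where c: "c1 \<in> children V r par s" "c2 \<in> children V r par s" "c1 \<noteq> c2"
       "anc par c1 (\<pi> s)" "anc par c2 (\<sigma> s)"
      using g sX unfolding P_def \<pi>_def \<sigma>_def by blast
    have c1V: "c1 \<in> V" "par c1 = s" "c1 \<noteq> r" "c2 \<in> V" "par c2 = s" "c2 \<noteq> r"
      using c(1,2) unfolding children_def by auto
    have below: "anc par ci x" if ci: "ci \<in> children V r par s" "anc par ci l" "anc par x l"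
       "anc par s x" "x \<noteq> s" for ci l x
    proof -
      have "par ci = s" using ci(1) unfolding children_def by auto
      from anc_lin[OF ci(3) ci(2)] show ?thesis
      proof
        assume "anc par x ci"
        then have "x = ci \<or> anc par x s" using anc_step[of par x ci] \<open>par ci = s\<close> by simp
        then show ?thesis using anc_antisym[OF tr sV, of x] ci(4,5) anc_refl[of par ci] by blast
      next
        assume "anc par ci x" then show ?thesis .
      qed
    qed
    have "anc par x s" if "anc par x (\<pi> s)" "anc par x (\<sigma> s)" for x
    proof -
      have "anc par s (\<pi> s)" using gp[OF sX] unfolding good_def by blast
      from anc_lin[OF that(1) this] show ?thesis
      proof
        assume sx: "anc par s x"
        show ?thesis
        proof (rule ccontr)
          assume "\<not> anc par x s"
          then have "x \<noteq> s" using anc_refl[of par s] by auto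
          then have "anc par c1 x" "anc par c2 x"
            using below[OF c(1) c(4) that(1) sx] below[OF c(2) c(5) that(2) sx] by blast+
          from anc_lin[OF this] have "anc par c1 c2 \<or> anc par c2 c1" .
          then show False
          proof
            assume "anc par c1 c2"
            then have "c1 = c2 \<or> anc par c1 s" using anc_step[of par c1 c2] c1V(5) by simp
            then have "c1 = s" using c(3) anc_antisym[OF tr sV, of c1] anc_par[of par c1] c1V(2) by auto
            then show False using par_ne[OF tr c1V(1) c1V(3)] c1V(2) by simp
          next
            assume "anc par c2 c1"
            then have "c2 = c1 \<or> anc par c2 s" using anc_step[of par c2 c1] c1V(2) by simp
            then have "c2 = s" using c(3) anc_antisym[OF tr sV, of c2] anc_par[of par c2] c1V(5) by auto
            then show False using par_ne[OF tr c1V(4) c1V(6)] c1V(5) by simp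
          qed
        qed
      next
        assume "anc par x s" then show ?thesis .
      qed
    qed
    then show ?thesis unfolding is_lca_def using gp[OF sX] unfolding good_def by blast
  qed
  have inj1: "inj_on \<pi> X"
  proof (rule inj_onI)
    fix s t assume st: "s \<in> X" "t \<in> X" "\<pi> s = \<pi> t"
    have "on_path par (\<pi> t) (\<sigma> t) (\<pi> s)" by (simp only: st(3) on_path_self)
    then show "s = t" by (rule UR[OF st(1) st(2) on_path_self])
  qed
  have inj2: "inj_on \<sigma> X"
  proof (rule inj_onI)
    fix s t assume st: "s \<in> X" "t \<in> X" "\<sigma> s = \<sigma> t"
    have "on_path par (\<pi> t) (\<sigma> t) (\<sigma> s)" by (simp only: st(3) on_path_self2)
    then show "s = t" by (rule UR[OF st(1) st(2) on_path_self2])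
  qed
  have l1: "\<pi> s \<in> leaves V r par" "\<sigma> s \<in> leaves V r par" if "s \<in> X" for s
    using gp[OF that] unfolding good_def by simp_all
  have "\<pi> ` X \<subseteq> leaves V r par" "\<sigma> ` X \<subseteq> leaves V r par"
    using l1 by (simp_all add: image_subset_iff)
  then have "identifies V r par X \<pi> \<sigma>"
    unfolding identifies_def using inj1 inj2 lca by simp
  moreover have "unique_request par X \<pi> \<sigma>"
    unfolding unique_request_def using UR by blast
  ultimately show ?thesis by blast
qed

end
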